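(* Let $\beta,\delta\in(0,1)$, $K>0$, $d_1,d_2>0$, and let $\eta_1,\eta_2\ge0$ be constants. Consider $$\frac{df}{dt}=\tfrac12 fm\beta L-\delta f-\eta_1\frac{f}{f+d_1},\qquad \frac{dm}{dt}=\tfrac12 fm\beta L-\delta m+\eta_2\frac{m}{m+d_2},\qquad L=1-\frac{f+m}{K}.$$ If $\beta K<2\delta+\frac{\eta_1}{K+d_1}-\frac{\eta_2}{d_2}$ and $\delta>\frac{\eta_2}{d_2}$, then the trivial equilibrium $(0,0)$ is globally asymptotically stable.
   Context: $f,m$ are female and male densities, with populations considered in the region $0\le f,m$, $f+m\le K$. The model uses saturating female harvesting and male stocking. *)

theory Defs
  imports "HOL-Analysis.Analysis"
begin

definition Lfac :: "real \<Rightarrow> real \<Rightarrow> real \<Rightarrow> real" where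
  "Lfac K f m = 1 - (f + m) / K"

definition rhs_f :: "real \<Rightarrow> real \<Rightarrow> real \<Rightarrow> real \<Rightarrow> real \<Rightarrow> real \<Rightarrow> real \<Rightarrow> real" where
  "rhs_f \<beta> \<delta> K d1 \<eta>1 f m = 1/2 * f * m * \<beta> * Lfac K f m - \<delta> * f - \<eta>1 * f / (f + d1)"

definition rhs_m :: "real \<Rightarrow> real \<Rightarrow> real \<Rightarrow> real \<Rightarrow> real \<Rightarrow> real \<Rightarrow> real \<Rightarrow> real" where
  "rhs_m \<beta> \<delta> K d2 \<eta>2 f m = 1/2 * f * m * \<beta> * Lfac K f m - \<delta> * m + \<eta>2 * m / (m + d2)"

definition region :: "real \<Rightarrow> real \<Rightarrow> real \<Rightarrow> bool" where
  "region K f m \<longleftrightarrow> 0 \<le> f \<and> 0 \<le> m \<and> f + m \<le> K"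

definition is_solution ::
  "real \<Rightarrow> real \<Rightarrow> real \<Rightarrow> real \<Rightarrow> real \<Rightarrow> real \<Rightarrow> real \<Rightarrow>
   (real \<Rightarrow> real) \<Rightarrow> (real \<Rightarrow> real) \<Rightarrow> bool" where
  "is_solution \<beta> \<delta> K d1 d2 \<eta>1 \<eta>2 f m \<longleftrightarrow>
     region K (f 0) (m 0) \<and>
     (\<forall>t\<ge>0. (f has_real_derivative rhs_f \<beta> \<delta> K d1 \<eta>1 (f t) (m t)) (at t within {0..}) \<and>
             (m has_real_derivative rhs_m \<beta> \<delta> K d2 \<eta>2 (f t) (m t)) (at t within {0..}))"

definition origin_GAS ::
  "real \<Rightarrow> real \<Rightarrow> real \<Rightarrow> real \<Rightarrow> real \<Rightarrow> real \<Rightarrow> real \<Rightarrow> bool" where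
  "origin_GAS \<beta> \<delta> K d1 d2 \<eta>1 \<eta>2 \<longleftrightarrow>
     (\<forall>\<epsilon>>0. \<exists>r>0. \<forall>f m. is_solution \<beta> \<delta> K d1 d2 \<eta>1 \<eta>2 f m \<longrightarrow>
        norm (f 0, m 0) < r \<longrightarrow> (\<forall>t\<ge>0. norm (f t, m t) < \<epsilon>)) \<and>
     (\<forall>f m. is_solution \<beta> \<delta> K d1 d2 \<eta>1 \<eta>2 f m \<longrightarrow>
        ((\<lambda>t. (f t, m t)) \<longlongrightarrow> (0, 0)) at_top)"

end

theory Submission
  imports Defs "HOL-Real_Asymp.Real_Asymp"
begin



lemma sign_pres:
  fixes u g :: "real \<Rightarrow> real"
  assumes ab: "a \<le> b" and cu: "continuous_on {a..b} u" and cg: "continuous_on {a..b} g"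
    and der: "\<And>t. a < t \<Longrightarrow> t < b \<Longrightarrow> (u has_real_derivative u t * g t) (at t)"
    and ua: "u a \<ge> 0" and t: "t \<in> {a..b}"
  shows "u t \<ge> 0"
proof -
  define G where "G x = integral {a..x} g" for x
  have dGw: "(G has_real_derivative g x) (at x within {a..b})" if "x \<in> {a..b}" for x
    unfolding G_def by (rule integral_has_real_derivative[OF cg that])
  have cG: "continuous_on {a..b} G"
    using dGw DERIV_continuous continuous_on_eq_continuous_within by blast
  define h where "h x = u x * exp (- G x)" for x
  have ch: "continuous_on {a..b} h" unfolding h_def
    by (intro continuous_intros cu cG)
  have dh: "(h has_real_derivative 0) (at x)" if "a < x" "x < b" for x
  proof -
    have "(G has_real_derivative g x) (at x)"
      using dGw[of x] that at_within_interior[of x "{a..b}"] by auto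
    then have "((\<lambda>x. - G x) has_real_derivative - g x) (at x)" by (rule DERIV_minus)
    then have e: "((\<lambda>x. exp (- G x)) has_real_derivative exp (- G x) * (- g x)) (at x)"
      by (rule DERIV_fun_exp)
    have "((\<lambda>x. u x * exp (- G x)) has_real_derivative u x * (exp (- G x) * (- g x)) + (u x * g x) * exp (- G x)) (at x)"
      by (rule DERIV_mult'[OF der[OF that] e])
    then have "(h has_real_derivative u x * (exp (- G x) * (- g x)) + (u x * g x) * exp (- G x)) (at x)"
      by (simp add: h_def[abs_def])
    then show ?thesis by (simp add: algebra_simps)
  qed
  have "h a \<le> h t"
  proof (rule DERIV_nonneg_imp_increasing_open[of a t h])
    show "a \<le> t" using t by auto
    show "\<exists>y. (h has_real_derivative y) (at x) \<and> 0 \<le> y" if "a < x" "x < t" for x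
      using dh[of x] that t by auto
    show "continuous_on {a..t} h" by (rule continuous_on_subset[OF ch]) (use t in auto)
  qed
  moreover have "h t \<le> h a"
  proof (rule DERIV_nonpos_imp_decreasing_open[of a t h])
    show "a \<le> t" using t by auto
    show "\<exists>y. (h has_real_derivative y) (at x) \<and> y \<le> 0" if "a < x" "x < t" for x
      using dh[of x] that t by auto
    show "continuous_on {a..t} h" by (rule continuous_on_subset[OF ch]) (use t in auto)
  qed
  ultimately have ht: "h t = h a" by simp
  have "h a = u a" by (simp add: h_def G_def)
  with ht have "0 \<le> u t * exp (- G t)" using ua unfolding h_def by simp
  then show ?thesis by (simp add: zero_le_mult_iff)
qed


lemma local_pos:
  fixes \<phi> :: "real \<Rightarrow> real"
  assumes c: "continuous (at T within {0..}) \<phi>" and T: "T \<ge> 0" and p: "\<phi> T > 0"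
  shows "\<exists>e>0. \<forall>t\<in>{T..T+e}. \<phi> t > 0"
proof -
  have "(\<phi> \<longlongrightarrow> \<phi> T) (at T within {0..})" using c by (simp add: continuous_within)
  then have "eventually (\<lambda>t. \<phi> t > 0) (at T within {0..})" using p by (rule order_tendstoD(1))
  then obtain d where d: "d > 0" and hd: "\<And>x. x \<in> {0..} \<Longrightarrow> x \<noteq> T \<Longrightarrow> dist x T < d \<Longrightarrow> \<phi> x > 0"
    unfolding eventually_at by blast
  show ?thesis
  proof (intro exI[of _ "d/2"] conjI ballI)
    show "d/2 > 0" using d by simp
    fix t assume t: "t \<in> {T..T + d/2}"
    show "\<phi> t > 0"
    proof (cases "t = T")
      case True then show ?thesis using p by simp
    next
      case False then show ?thesis using t T d by (intro hd) (auto simp: dist_real_def)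
    qed
  qed
qed

lemma left_closed:
  fixes \<phi> :: "real \<Rightarrow> real"
  assumes c: "continuous (at T within {0..}) \<phi>" and T: "T > 0" and h: "\<forall>t\<in>{0..<T}. \<phi> t \<ge> 0"
  shows "\<phi> T \<ge> 0"
proof (rule ccontr)
  assume "\<not> \<phi> T \<ge> 0"
  then have p: "\<phi> T < 0" by simp
  have "(\<phi> \<longlongrightarrow> \<phi> T) (at T within {0..})" using c by (simp add: continuous_within)
  then have "eventually (\<lambda>t. \<phi> t < 0) (at T within {0..})" using p by (rule order_tendstoD(2))
  then obtain d where d: "d > 0" and hd: "\<And>x. x \<in> {0..} \<Longrightarrow> x \<noteq> T \<Longrightarrow> dist x T < d \<Longrightarrow> \<phi> x < 0"
    unfolding eventually_at by blast
  define t where "t = T - min d T / 2"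
  have "\<phi> t < 0" using d T by (intro hd) (auto simp: t_def dist_real_def)
  moreover have "\<phi> t \<ge> 0" using h d T by (auto simp: t_def)
  ultimately show False by simp
qed

lemma cont_on_of_within:
  fixes \<phi> :: "real \<Rightarrow> real"
  assumes "\<And>t. t \<ge> 0 \<Longrightarrow> continuous (at t within {0..}) \<phi>" and "a \<ge> 0"
  shows "continuous_on {a..b} \<phi>"
  unfolding continuous_on_eq_continuous_within
proof
  fix x assume x: "x \<in> {a..b}"
  then have "continuous (at x within {0..}) \<phi>" using assms by auto
  then show "continuous (at x within {a..b}) \<phi>"
    by (rule continuous_within_subset) (use assms(2) in auto)
qed

lemma deriv_interior:
  fixes \<phi> :: "real \<Rightarrow> real"
  assumes "(\<phi> has_real_derivative D) (at t within {0..})" "t > 0"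
  shows "(\<phi> has_real_derivative D) (at t)"
  using assms at_within_interior[of t "{0..}"] by (simp add: interior_real_atLeast)


lemma boundary_neg:
  fixes \<delta> K d1 d2 \<eta>1 \<eta>2 f m :: real
  assumes "K > 0" "d1 > 0" "d2 > 0" "\<eta>1 \<ge> 0" "\<eta>2 \<ge> 0" "\<delta> > \<eta>2 / d2"
    and "f \<ge> 0" "m \<ge> 0" "f + m = K"
  shows "rhs_f \<beta> \<delta> K d1 \<eta>1 f m + rhs_m \<beta> \<delta> K d2 \<eta>2 f m < 0"
proof -
  have L: "Lfac K f m = 0" using assms by (simp add: Lfac_def)
  have a: "\<eta>1 * f / (f + d1) \<ge> 0" using assms by simp
  have "\<eta>2 * m / (m + d2) \<le> \<eta>2 * m / d2"
    using assms by (intro divide_left_mono mult_nonneg_nonneg) auto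
  also have "\<dots> \<le> \<eta>2 * K / d2" using assms by (intro divide_right_mono mult_left_mono) auto
  also have "\<dots> = (\<eta>2 / d2) * K" by simp
  also have "\<dots> < \<delta> * K" using assms by (intro mult_strict_right_mono) auto
  finally have b: "\<eta>2 * m / (m + d2) < \<delta> * K" .
  have c: "\<delta> * f + \<delta> * m = \<delta> * K" using assms(9) by (metis distrib_left)
  have "rhs_f \<beta> \<delta> K d1 \<eta>1 f m + rhs_m \<beta> \<delta> K d2 \<eta>2 f m
      = - (\<delta> * f + \<delta> * m) - \<eta>1 * f / (f + d1) + \<eta>2 * m / (m + d2)"
    unfolding rhs_f_def rhs_m_def L by simp
  then show ?thesis using a b c by linarith
qed

lemma invariant:
  fixes \<beta> \<delta> K d1 d2 \<eta>1 \<eta>2 :: real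
  assumes "K > 0" "d1 > 0" "d2 > 0" "\<eta>1 \<ge> 0" "\<eta>2 \<ge> 0" "\<delta> > \<eta>2 / d2"
    and sol: "is_solution \<beta> \<delta> K d1 d2 \<eta>1 \<eta>2 f m"
  shows "\<forall>t\<ge>0. region K (f t) (m t)"
proof (rule ccontr)
  assume "\<not> (\<forall>t\<ge>0. region K (f t) (m t))"
  define B where "B = {t. t \<ge> 0 \<and> \<not> region K (f t) (m t)}"
  define T where "T = Inf B"
  have Bne: "B \<noteq> {}" using \<open>\<not> _\<close> by (auto simp: B_def)
  have bdd: "bdd_below B" by (auto simp: B_def bdd_below_def)
  have T0: "T \<ge> 0" unfolding T_def by (rule cInf_greatest[OF Bne]) (auto simp: B_def)
  have before: "region K (f t) (m t)" if "t \<ge> 0" "t < T" for t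
  proof (rule ccontr)
    assume "\<not> region K (f t) (m t)"
    then have "t \<in> B" using that by (auto simp: B_def)
    then have "T \<le> t" unfolding T_def using bdd by (rule cInf_lower)
    then show False using that by simp
  qed
  have r0: "region K (f 0) (m 0)" using sol by (simp add: is_solution_def)
  have df: "(f has_real_derivative rhs_f \<beta> \<delta> K d1 \<eta>1 (f t) (m t)) (at t within {0..})" if "t \<ge> 0" for t
    using sol that by (simp add: is_solution_def)
  have dm: "(m has_real_derivative rhs_m \<beta> \<delta> K d2 \<eta>2 (f t) (m t)) (at t within {0..})" if "t \<ge> 0" for t
    using sol that by (simp add: is_solution_def)
  have cf: "continuous (at t within {0..}) f" if "t \<ge> 0" for t using df[OF that] by (rule DERIV_continuous)
  have cm: "continuous (at t within {0..}) m" if "t \<ge> 0" for t using dm[OF that] by (rule DERIV_continuous)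
  have rT: "region K (f T) (m T)"
  proof (cases "T = 0")
    case True then show ?thesis using r0 by simp
  next
    case False
    then have Tp: "T > 0" using T0 by simp
    have "f T \<ge> 0" using left_closed[OF cf[OF T0] Tp] before by (auto simp: region_def)
    moreover have "m T \<ge> 0" using left_closed[OF cm[OF T0] Tp] before by (auto simp: region_def)
    moreover have "K - (f T + m T) \<ge> 0"
    proof (rule left_closed[of T "\<lambda>t. K - (f t + m t)", OF _ Tp])
      show "continuous (at T within {0..}) (\<lambda>t. K - (f t + m t))"
        using cf[OF T0] cm[OF T0] by (intro continuous_intros)
      show "\<forall>t\<in>{0..<T}. 0 \<le> K - (f t + m t)" using before by (auto simp: region_def)
    qed
    ultimately show ?thesis by (simp add: region_def)
  qed
  obtain e1 where e1: "e1 > 0" "\<forall>t\<in>{T..T+e1}. f t + d1 > 0"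
  proof -
    have "continuous (at T within {0..}) (\<lambda>t. f t + d1)" using cf[OF T0] by (intro continuous_intros)
    moreover have "f T + d1 > 0" using rT assms by (simp add: region_def)
    ultimately show ?thesis using local_pos[of T "\<lambda>t. f t + d1"] T0 that by blast
  qed
  obtain e2 where e2: "e2 > 0" "\<forall>t\<in>{T..T+e2}. m t + d2 > 0"
  proof -
    have "continuous (at T within {0..}) (\<lambda>t. m t + d2)" using cm[OF T0] by (intro continuous_intros)
    moreover have "m T + d2 > 0" using rT assms by (simp add: region_def)
    ultimately show ?thesis using local_pos[of T "\<lambda>t. m t + d2"] T0 that by blast
  qed
  obtain e3 where e3: "e3 > 0" "\<forall>t\<in>{T..T+e3}. f t + m t \<le> K"
  proof (cases "f T + m T < K")
    case True
    then obtain e where "e > 0" "\<forall>t\<in>{T..T+e}. K - (f t + m t) > 0"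
    proof -
      have "continuous (at T within {0..}) (\<lambda>t. K - (f t + m t))" using cf[OF T0] cm[OF T0] by (intro continuous_intros)
      then show ?thesis using local_pos[of T "\<lambda>t. K - (f t + m t)"] T0 True that by auto
    qed
    then show ?thesis using that[of e] by force
  next
    case False
    then have eq: "f T + m T = K" using rT by (simp add: region_def)
    have "((\<lambda>t. f t + m t) has_real_derivative
        rhs_f \<beta> \<delta> K d1 \<eta>1 (f T) (m T) + rhs_m \<beta> \<delta> K d2 \<eta>2 (f T) (m T)) (at T within {0..})"
      using df[OF T0] dm[OF T0] by (rule DERIV_add)
    moreover have "rhs_f \<beta> \<delta> K d1 \<eta>1 (f T) (m T) + rhs_m \<beta> \<delta> K d2 \<eta>2 (f T) (m T) < 0"
      using boundary_neg[of K d1 d2 \<eta>1 \<eta>2 \<delta> "f T" "m T"] assms rT eq by (auto simp: region_def)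
    ultimately obtain d where d: "d > 0" "\<forall>h>0. T + h \<in> {0..} \<longrightarrow> h < d \<longrightarrow> f (T+h) + m (T+h) < f T + m T"
      using has_real_derivative_neg_dec_right by blast
    have "\<forall>t\<in>{T..T+d/2}. f t + m t \<le> K"
    proof
      fix t assume t: "t \<in> {T..T+d/2}"
      show "f t + m t \<le> K"
      proof (cases "t = T")
        case True then show ?thesis using eq by simp
      next
        case False
        then have "f (T + (t - T)) + m (T + (t - T)) < f T + m T"
          using d t T0 by (intro d(2)[rule_format]) auto
        then show ?thesis using eq by simp
      qed
    qed
    then show ?thesis using that[of "d/2"] d by auto
  qed
  define e where "e = min e1 (min e2 e3)"
  have e: "e > 0" using e1 e2 e3 by (simp add: e_def)
  have fpos: "f t + d1 > 0" "m t + d2 > 0" "f t + m t \<le> K" if "t \<in> {T..T+e}" for t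
    using e1 e2 e3 that by (auto simp: e_def)
  have cfo: "continuous_on {T..T+e} f" by (rule cont_on_of_within[OF cf T0])
  have cmo: "continuous_on {T..T+e} m" by (rule cont_on_of_within[OF cm T0])
  have fnn: "f t \<ge> 0" if t: "t \<in> {T..T+e}" for t
  proof (rule sign_pres[of T "T+e" f "\<lambda>t. 1/2 * m t * \<beta> * Lfac K (f t) (m t) - \<delta> - \<eta>1 / (f t + d1)"])
    show "T \<le> T + e" using e by simp
    show "continuous_on {T..T + e} f" by (rule cfo)
    show "continuous_on {T..T + e} (\<lambda>t. 1/2 * m t * \<beta> * Lfac K (f t) (m t) - \<delta> - \<eta>1 / (f t + d1))"
      unfolding Lfac_def using fpos(1) assms(1) by (intro continuous_intros cfo cmo) (auto simp: less_imp_neq[symmetric] dest: less_imp_neq fpos(1))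
    show "(f has_real_derivative f s * (1/2 * m s * \<beta> * Lfac K (f s) (m s) - \<delta> - \<eta>1 / (f s + d1))) (at s)"
      if "T < s" "s < T + e" for s
    proof -
      have "(f has_real_derivative rhs_f \<beta> \<delta> K d1 \<eta>1 (f s) (m s)) (at s)"
        using that T0 by (intro deriv_interior df) auto
      moreover have "rhs_f \<beta> \<delta> K d1 \<eta>1 (f s) (m s) = f s * (1/2 * m s * \<beta> * Lfac K (f s) (m s) - \<delta> - \<eta>1 / (f s + d1))"
        unfolding rhs_f_def by (simp add: algebra_simps)
      ultimately show ?thesis by simp
    qed
    show "f T \<ge> 0" using rT by (simp add: region_def)
    show "t \<in> {T..T+e}" by (rule t)
  qed
  have mnn: "m t \<ge> 0" if t: "t \<in> {T..T+e}" for t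
  proof (rule sign_pres[of T "T+e" m "\<lambda>t. 1/2 * f t * \<beta> * Lfac K (f t) (m t) - \<delta> + \<eta>2 / (m t + d2)"])
    show "T \<le> T + e" using e by simp
    show "continuous_on {T..T + e} m" by (rule cmo)
    show "continuous_on {T..T + e} (\<lambda>t. 1/2 * f t * \<beta> * Lfac K (f t) (m t) - \<delta> + \<eta>2 / (m t + d2))"
      unfolding Lfac_def using fpos(2) assms(1) by (intro continuous_intros cfo cmo) (auto dest: less_imp_neq fpos(2))
    show "(m has_real_derivative m s * (1/2 * f s * \<beta> * Lfac K (f s) (m s) - \<delta> + \<eta>2 / (m s + d2))) (at s)"
      if "T < s" "s < T + e" for s
    proof -
      have "(m has_real_derivative rhs_m \<beta> \<delta> K d2 \<eta>2 (f s) (m s)) (at s)"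
        using that T0 by (intro deriv_interior dm) auto
      moreover have "rhs_m \<beta> \<delta> K d2 \<eta>2 (f s) (m s) = m s * (1/2 * f s * \<beta> * Lfac K (f s) (m s) - \<delta> + \<eta>2 / (m s + d2))"
        unfolding rhs_m_def by (simp add: algebra_simps)
      ultimately show ?thesis by simp
    qed
    show "m T \<ge> 0" using rT by (simp add: region_def)
    show "t \<in> {T..T+e}" by (rule t)
  qed
  have "T + e \<le> T" unfolding T_def
  proof (rule cInf_greatest[OF Bne])
    fix t assume "t \<in> B"
    then have t0: "t \<ge> 0" and nr: "\<not> region K (f t) (m t)" by (auto simp: B_def)
    show "Inf B + e \<le> t"
    proof (rule ccontr)
      assume "\<not> Inf B + e \<le> t"
      then have "t < T + e" by (simp add: T_def)
      show False
      proof (cases "t < T")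
        case True then show False using before[OF t0] nr by simp
      next
        case False
        then have "t \<in> {T..T+e}" using \<open>t < T + e\<close> by simp
        then show False using fnn mnn fpos(3) nr by (auto simp: region_def)
      qed
    qed
  qed
  then show False using e by simp
qed


lemma mL_bound:
  fixes K f m :: real
  assumes "K > 0" "region K f m"
  shows "m * Lfac K f m \<le> K / 4" "m * Lfac K f m \<ge> 0"
proof -
  have f: "f \<ge> 0" "m \<ge> 0" "f + m \<le> K" using assms by (auto simp: region_def)
  have "Lfac K f m \<le> 1 - m / K" using f assms(1) by (simp add: Lfac_def divide_right_mono)
  then have "m * Lfac K f m \<le> m * (1 - m / K)" using f by (simp add: mult_left_mono)
  also have "\<dots> = (m * K - m * m) / K" using assms(1) by (simp add: field_simps)
  also have "\<dots> \<le> K / 4"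
  proof -
    have "m * K - m * m \<le> K * K / 4" using sum_squares_ge_zero[of "K - 2*m" 0]
      by (simp add: algebra_simps power2_eq_square)
    then show ?thesis using assms(1) by (simp add: divide_simps)
  qed
  finally show "m * Lfac K f m \<le> K / 4" .
  have "Lfac K f m \<ge> 0" using f assms(1) by (simp add: Lfac_def)
  then show "m * Lfac K f m \<ge> 0" using f by simp
qed

lemma rhs_f_bound:
  fixes \<beta> \<delta> K d1 \<eta>1 f m :: real
  assumes "\<beta> > 0" "K > 0" "d1 > 0" "\<eta>1 \<ge> 0" "region K f m"
  shows "rhs_f \<beta> \<delta> K d1 \<eta>1 f m \<le> - (\<delta> + \<eta>1 / (K + d1) - \<beta> * K / 8) * f"
proof -
  have f: "f \<ge> 0" "m \<ge> 0" "f + m \<le> K" using assms by (auto simp: region_def)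
  have "1/2 * f * m * \<beta> * Lfac K f m = (\<beta> * f / 2) * (m * Lfac K f m)" by simp
  also have "\<dots> \<le> (\<beta> * f / 2) * (K / 4)"
    using mL_bound[OF assms(2,5)] f assms(1) by (intro mult_left_mono) auto
  finally have a: "1/2 * f * m * \<beta> * Lfac K f m \<le> \<beta> * K / 8 * f" by (simp add: mult_ac)
  have "\<eta>1 * f / (K + d1) \<le> \<eta>1 * f / (f + d1)"
    using f assms by (intro divide_left_mono) auto
  then have b: "\<eta>1 / (K + d1) * f \<le> \<eta>1 * f / (f + d1)" by simp
  have e1: "rhs_f \<beta> \<delta> K d1 \<eta>1 f m = 1/2 * f * m * \<beta> * Lfac K f m - \<delta> * f - \<eta>1 * f / (f + d1)"
    by (simp add: rhs_f_def)
  have e2: "- (\<delta> + \<eta>1 / (K + d1) - \<beta> * K / 8) * f = - (\<delta> * f) - \<eta>1 / (K + d1) * f + \<beta> * K / 8 * f"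
    by (simp add: algebra_simps)
  show ?thesis unfolding e1 e2 using a b by linarith
qed

lemma rhs_m_bound:
  fixes \<beta> \<delta> K d2 \<eta>2 f m :: real
  assumes "\<beta> > 0" "K > 0" "d2 > 0" "\<eta>2 \<ge> 0" "region K f m"
  shows "rhs_m \<beta> \<delta> K d2 \<eta>2 f m \<le> \<beta> * K / 8 * f - (\<delta> - \<eta>2 / d2) * m"
proof -
  have f: "f \<ge> 0" "m \<ge> 0" "f + m \<le> K" using assms by (auto simp: region_def)
  have "1/2 * f * m * \<beta> * Lfac K f m = (\<beta> * f / 2) * (m * Lfac K f m)" by simp
  also have "\<dots> \<le> (\<beta> * f / 2) * (K / 4)"
    using mL_bound[OF assms(2,5)] f assms(1) by (intro mult_left_mono) auto
  finally have a: "1/2 * f * m * \<beta> * Lfac K f m \<le> \<beta> * K / 8 * f" by (simp add: mult_ac)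
  have "\<eta>2 * m / (m + d2) \<le> \<eta>2 * m / d2"
    using f assms by (intro divide_left_mono) auto
  then have b: "\<eta>2 * m / (m + d2) \<le> \<eta>2 / d2 * m" by simp
  have e1: "rhs_m \<beta> \<delta> K d2 \<eta>2 f m = 1/2 * f * m * \<beta> * Lfac K f m - \<delta> * m + \<eta>2 * m / (m + d2)"
    by (simp add: rhs_m_def)
  have e2: "\<beta> * K / 8 * f - (\<delta> - \<eta>2 / d2) * m = \<beta> * K / 8 * f - \<delta> * m + \<eta>2 / d2 * m"
    by (simp add: algebra_simps)
  show ?thesis unfolding e1 e2 using a b by linarith
qed


lemma decay:
  fixes \<beta> \<delta> K d1 d2 \<eta>1 \<eta>2 :: real
  assumes "0 < \<beta>" "K > 0" "d1 > 0" "d2 > 0" "\<eta>1 \<ge> 0" "\<eta>2 \<ge> 0"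
    and hyp: "\<beta> * K < 2 * \<delta> + \<eta>1 / (K + d1) - \<eta>2 / d2"
    and hd: "\<delta> > \<eta>2 / d2"
    and sol: "is_solution \<beta> \<delta> K d1 d2 \<eta>1 \<eta>2 f m"
  shows "\<forall>t\<ge>0. f t \<ge> 0 \<and> m t \<ge> 0 \<and>
    (\<beta> * K / (\<delta> + \<eta>1 / (K + d1) - \<beta> * K / 8) + 1) * f t + m t \<le>
    ((\<beta> * K / (\<delta> + \<eta>1 / (K + d1) - \<beta> * K / 8) + 1) * f 0 + m 0) *
      exp (- min (\<delta> - \<eta>2 / d2) ((\<delta> + \<eta>1 / (K + d1) - \<beta> * K / 8) / 2) * t)"
proof -
  have inv: "region K (f t) (m t)" if "t \<ge> 0" for t
    using invariant[of K d1 d2 \<eta>1 \<eta>2 \<delta> \<beta> f m] assms that by auto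
  define c where "c = \<delta> + \<eta>1 / (K + d1) - \<beta> * K / 8"
  define a where "a = \<delta> - \<eta>2 / d2"
  have q1: "\<eta>1 / (K + d1) \<ge> 0" "\<eta>2 / d2 \<ge> 0" using assms by auto
  have c0: "c > 0" unfolding c_def using hyp q1 hd by linarith
  have a0: "a > 0" unfolding a_def using hd by simp
  define \<kappa> where "\<kappa> = min a (c/2)"
  define A where "A = \<beta> * K / c + 1"
  have k0: "\<kappa> > 0" using a0 c0 by (simp add: \<kappa>_def)
  have A1: "A \<ge> 1" using assms c0 by (simp add: A_def)
  have Ac: "A * c = \<beta> * K + c" using c0 by (simp add: A_def field_simps)
  have Ak: "A * \<kappa> \<le> A * (c / 2)" using A1 by (intro mult_left_mono) (auto simp: \<kappa>_def)
  have Ac2: "A * (c / 2) = (\<beta> * K + c) / 2" using Ac by simp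
  have bK: "\<beta> * K > 0" using assms by simp
  have coef0: "- (A * c) + \<beta> * K / 8 \<le> - (A * \<kappa>)" using Ac Ak Ac2 bK c0 by linarith
  have coef: "- A * c + \<beta> * K / 8 \<le> - (\<kappa> * A)" using coef0 by (simp add: mult.commute)
  have df: "(f has_real_derivative rhs_f \<beta> \<delta> K d1 \<eta>1 (f t) (m t)) (at t within {0..})" if "t \<ge> 0" for t
    using sol that by (simp add: is_solution_def)
  have dm: "(m has_real_derivative rhs_m \<beta> \<delta> K d2 \<eta>2 (f t) (m t)) (at t within {0..})" if "t \<ge> 0" for t
    using sol that by (simp add: is_solution_def)
  have cf: "continuous (at t within {0..}) f" if "t \<ge> 0" for t using df[OF that] by (rule DERIV_continuous)
  have cm: "continuous (at t within {0..}) m" if "t \<ge> 0" for t using dm[OF that] by (rule DERIV_continuous)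
  have Dbound: "A * rhs_f \<beta> \<delta> K d1 \<eta>1 (f t) (m t) + rhs_m \<beta> \<delta> K d2 \<eta>2 (f t) (m t) \<le> - \<kappa> * (A * f t + m t)"
    if t: "t \<ge> 0" for t
  proof -
    have r: "region K (f t) (m t)" by (rule inv[OF t])
    have fm: "f t \<ge> 0" "m t \<ge> 0" using r by (auto simp: region_def)
    have b1: "rhs_f \<beta> \<delta> K d1 \<eta>1 (f t) (m t) \<le> - c * f t"
      using rhs_f_bound[of \<beta> K d1 \<eta>1 "f t" "m t" \<delta>] assms r by (simp add: c_def)
    have b2: "rhs_m \<beta> \<delta> K d2 \<eta>2 (f t) (m t) \<le> \<beta> * K / 8 * f t - a * m t"
      using rhs_m_bound[of \<beta> K d2 \<eta>2 "f t" "m t" \<delta>] assms r by (simp add: a_def)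
    have "A * rhs_f \<beta> \<delta> K d1 \<eta>1 (f t) (m t) \<le> A * (- c * f t)"
      using b1 A1 by (intro mult_left_mono) auto
    moreover have "(- A * c + \<beta> * K / 8) * f t \<le> - (\<kappa> * A) * f t"
      using coef fm by (intro mult_right_mono) auto
    moreover have "- a * m t \<le> - \<kappa> * m t" using fm by (intro mult_right_mono) (auto simp: \<kappa>_def)
    ultimately show ?thesis using b2 by (simp add: algebra_simps)
  qed
  define W where "W t = (A * f t + m t) * exp (\<kappa> * t)" for t
  have dW: "(W has_real_derivative
      (A * rhs_f \<beta> \<delta> K d1 \<eta>1 (f t) (m t) + rhs_m \<beta> \<delta> K d2 \<eta>2 (f t) (m t)) * exp (\<kappa> * t)
      + (A * f t + m t) * (exp (\<kappa> * t) * \<kappa>)) (at t)" if t: "t > 0" for t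
  proof -
    have d1': "(f has_real_derivative rhs_f \<beta> \<delta> K d1 \<eta>1 (f t) (m t)) (at t)"
      using t by (intro deriv_interior df) auto
    have d2': "(m has_real_derivative rhs_m \<beta> \<delta> K d2 \<eta>2 (f t) (m t)) (at t)"
      using t by (intro deriv_interior dm) auto
    have dV: "((\<lambda>t. A * f t + m t) has_real_derivative A * rhs_f \<beta> \<delta> K d1 \<eta>1 (f t) (m t) + rhs_m \<beta> \<delta> K d2 \<eta>2 (f t) (m t)) (at t)"
      by (rule DERIV_add[OF DERIV_cmult[OF d1'] d2'])
    have "((\<lambda>t. \<kappa> * t) has_real_derivative \<kappa>) (at t)" by (auto intro!: derivative_eq_intros)
    then have dE: "((\<lambda>t. exp (\<kappa> * t)) has_real_derivative exp (\<kappa> * t) * \<kappa>) (at t)"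
      by (rule DERIV_fun_exp)
    show ?thesis unfolding W_def[abs_def] using DERIV_mult[OF dV dE] by (simp add: algebra_simps)
  qed
  have Wdec: "W t \<le> W 0" if t: "t \<ge> 0" for t
  proof (rule DERIV_nonpos_imp_decreasing_open[of 0 t W])
    show "0 \<le> t" by (rule t)
    show "\<exists>y. (W has_real_derivative y) (at x) \<and> y \<le> 0" if "0 < x" "x < t" for x
    proof -
      have "(A * rhs_f \<beta> \<delta> K d1 \<eta>1 (f x) (m x) + rhs_m \<beta> \<delta> K d2 \<eta>2 (f x) (m x)) + \<kappa> * (A * f x + m x) \<le> 0"
        using Dbound[of x] that by simp
      then have "exp (\<kappa> * x) * ((A * rhs_f \<beta> \<delta> K d1 \<eta>1 (f x) (m x) + rhs_m \<beta> \<delta> K d2 \<eta>2 (f x) (m x)) + \<kappa> * (A * f x + m x)) \<le> 0"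
        by (simp add: mult_nonneg_nonpos)
      then have "(A * rhs_f \<beta> \<delta> K d1 \<eta>1 (f x) (m x) + rhs_m \<beta> \<delta> K d2 \<eta>2 (f x) (m x)) * exp (\<kappa> * x)
        + (A * f x + m x) * (exp (\<kappa> * x) * \<kappa>) \<le> 0" by (simp add: algebra_simps)
      then show ?thesis using dW[of x] that by blast
    qed
    have "continuous_on {0..t} f" by (rule cont_on_of_within[OF cf]) auto
    moreover have "continuous_on {0..t} m" by (rule cont_on_of_within[OF cm]) auto
    ultimately show "continuous_on {0..t} W" unfolding W_def[abs_def] by (intro continuous_intros)
  qed
  have main: "f t \<ge> 0 \<and> m t \<ge> 0 \<and> A * f t + m t \<le> (A * f 0 + m 0) * exp (- \<kappa> * t)" if t: "t \<ge> 0" for t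
  proof (intro conjI)
    show "f t \<ge> 0" "m t \<ge> 0" using inv[OF t] by (auto simp: region_def)
    have "W t \<le> A * f 0 + m 0" using Wdec[OF t] by (simp add: W_def)
    then have w1: "W t * exp (- \<kappa> * t) \<le> (A * f 0 + m 0) * exp (- \<kappa> * t)"
      by (intro mult_right_mono) auto
    have w2: "W t * exp (- \<kappa> * t) = A * f t + m t"
      by (simp add: W_def mult.assoc exp_add[symmetric])
    show "A * f t + m t \<le> (A * f 0 + m 0) * exp (- \<kappa> * t)" using w1 w2 by linarith
  qed
  show ?thesis using main unfolding \<kappa>_def A_def a_def c_def by blast
qed


lemma decay_unif:
  fixes \<beta> \<delta> K d1 d2 \<eta>1 \<eta>2 :: real
  assumes "0 < \<beta>" "K > 0" "d1 > 0" "d2 > 0" "\<eta>1 \<ge> 0" "\<eta>2 \<ge> 0"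
    and hyp: "\<beta> * K < 2 * \<delta> + \<eta>1 / (K + d1) - \<eta>2 / d2"
    and hd: "\<delta> > \<eta>2 / d2"
  shows "\<exists>\<kappa>>0. \<exists>A\<ge>1. \<forall>f m. is_solution \<beta> \<delta> K d1 d2 \<eta>1 \<eta>2 f m \<longrightarrow>
     (\<forall>t\<ge>0. f t \<ge> 0 \<and> m t \<ge> 0 \<and> A * f t + m t \<le> (A * f 0 + m 0) * exp (- \<kappa> * t))"
proof -
  define c where "c = \<delta> + \<eta>1 / (K + d1) - \<beta> * K / 8"
  have q1: "\<eta>1 / (K + d1) \<ge> 0" "\<eta>2 / d2 \<ge> 0" using assms by auto
  have c0: "c > 0" unfolding c_def using hyp q1 hd by linarith
  have k0: "min (\<delta> - \<eta>2 / d2) (c / 2) > 0" using c0 hd by simp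
  have A1: "\<beta> * K / c + 1 \<ge> 1" using c0 assms by simp
  show ?thesis
    using decay[OF assms] k0 A1 unfolding c_def[symmetric] by blast
qed

theorem mainTheorem10:
  fixes \<beta> \<delta> K d1 d2 \<eta>1 \<eta>2 :: real
  assumes "0 < \<beta>" "\<beta> < 1" "0 < \<delta>" "\<delta> < 1"
    and "K > 0" "d1 > 0" "d2 > 0" "\<eta>1 \<ge> 0" "\<eta>2 \<ge> 0"
    and "\<beta> * K < 2 * \<delta> + \<eta>1 / (K + d1) - \<eta>2 / d2"
    and "\<delta> > \<eta>2 / d2"
  shows "origin_GAS \<beta> \<delta> K d1 d2 \<eta>1 \<eta>2"
proof -
  obtain \<kappa> A where k0: "\<kappa> > 0" and A1: "A \<ge> 1" and D: "\<And>f m t. is_solution \<beta> \<delta> K d1 d2 \<eta>1 \<eta>2 f m \<Longrightarrow> t \<ge> 0 \<Longrightarrow>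
     f t \<ge> 0 \<and> m t \<ge> 0 \<and> A * f t + m t \<le> (A * f 0 + m 0) * exp (- \<kappa> * t)"
    using decay_unif[of \<beta> K d1 d2 \<eta>1 \<eta>2 \<delta>] assms by blast
  have nb: "norm (f t, m t) \<le> (A * f 0 + m 0) * exp (- \<kappa> * t)"
    if sol: "is_solution \<beta> \<delta> K d1 d2 \<eta>1 \<eta>2 f m" and t: "t \<ge> 0" for f m t
  proof -
    have d: "f t \<ge> 0" "m t \<ge> 0" "A * f t + m t \<le> (A * f 0 + m 0) * exp (- \<kappa> * t)"
      using D[OF sol t] by auto
    have "norm (f t, m t) \<le> norm (f t) + norm (m t)" by (rule norm_Pair_le)
    also have "\<dots> = f t + m t" using d by simp
    also have "\<dots> \<le> A * f t + m t" using A1 d(1) by (simp add: mult_le_cancel_right1)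
    finally show ?thesis using d(3) by linarith
  qed
  show ?thesis unfolding origin_GAS_def
  proof (intro conjI allI impI)
    fix \<epsilon> :: real assume e: "\<epsilon> > 0"
    show "\<exists>r>0. \<forall>f m. is_solution \<beta> \<delta> K d1 d2 \<eta>1 \<eta>2 f m \<longrightarrow>
        norm (f 0, m 0) < r \<longrightarrow> (\<forall>t\<ge>0. norm (f t, m t) < \<epsilon>)"
    proof (intro exI[of _ "\<epsilon> / (2 * (A + 1))"] conjI allI impI)
      show "\<epsilon> / (2 * (A + 1)) > 0" using e A1 by simp
      fix f m t assume sol: "is_solution \<beta> \<delta> K d1 d2 \<eta>1 \<eta>2 f m"
        and n0: "norm (f 0, m 0) < \<epsilon> / (2 * (A + 1))" and t: "t \<ge> (0::real)"
      have f0: "f 0 < \<epsilon> / (2 * (A + 1))" using norm_fst_le[of "f 0" "m 0"] n0 by simp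
      have m0: "m 0 < \<epsilon> / (2 * (A + 1))" using norm_snd_le[of "m 0" "f 0"] n0 by simp
      have "A * f 0 \<le> A * (\<epsilon> / (2 * (A + 1)))" using f0 A1 by (intro mult_left_mono) auto
      moreover have "(A + 1) * (\<epsilon> / (2 * (A + 1))) = A * (\<epsilon> / (2 * (A + 1))) + \<epsilon> / (2 * (A + 1))"
        by (simp only: distrib_right mult_1_left)
      ultimately have "A * f 0 + m 0 < (A + 1) * (\<epsilon> / (2 * (A + 1)))" using m0 by linarith
      also have "\<dots> = \<epsilon> / 2" using A1 by (simp add: field_simps)
      finally have V0: "A * f 0 + m 0 < \<epsilon> / 2" .
      have V0n: "A * f 0 + m 0 \<ge> 0" using D[OF sol, of 0] A1 by simp
      have "(A * f 0 + m 0) * exp (- \<kappa> * t) \<le> (A * f 0 + m 0) * 1"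
        using V0n k0 t by (intro mult_left_mono) auto
      then have "(A * f 0 + m 0) * exp (- \<kappa> * t) \<le> A * f 0 + m 0" by simp
      then show "norm (f t, m t) < \<epsilon>" using nb[OF sol t] V0 e by linarith
    qed
  next
    fix f m assume sol: "is_solution \<beta> \<delta> K d1 d2 \<eta>1 \<eta>2 f m"
    have lim: "((\<lambda>t. (A * f 0 + m 0) * exp (- \<kappa> * t)) \<longlongrightarrow> 0) at_top"
      using k0 by real_asymp
    have "((\<lambda>t. norm (f t, m t)) \<longlongrightarrow> 0) at_top"
    proof (rule tendsto_sandwich[OF _ _ tendsto_const lim])
      show "\<forall>\<^sub>F t in at_top. 0 \<le> norm (f t, m t)" by simp
      show "\<forall>\<^sub>F t in at_top. norm (f t, m t) \<le> (A * f 0 + m 0) * exp (- \<kappa> * t)"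
        using eventually_ge_at_top[of "0::real"] by eventually_elim (rule nb[OF sol])
    qed
    then have "((\<lambda>t. (f t, m t)) \<longlongrightarrow> 0) at_top" by (rule tendsto_norm_zero_cancel)
    then show "((\<lambda>t. (f t, m t)) \<longlongrightarrow> (0, 0)) at_top" by (simp add: zero_prod_def)
  qed
qed

end
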